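(* For the grid graph $G=P_s \times P_t$ with $s\ge t\ge2$, $\dim_{1,f}(G)=\dim_f(G)$ if and only if $G\in\{P_2 \times P_2, P_3\times P_2, P_4\times P_2, P_3 \times P_3\}$.
   Context: $P_n$ is the path on $n$ vertices and $\times$ denotes the Cartesian product. $d(x,y)$ is the distance in $G$. For a function $g$ on $V(G)$ and $U\subseteq V(G)$, $g(U)=\sum_{s\in U}g(s)$. $R\{x,y\}=\{z: d(x,z)\ne d(y,z)\}$; $g:V(G)\to[0,1]$ is a resolving function if $g(R\{x,y\})\ge1$ for all distinct $x,y$, and $\dim_f(G)$ is the minimum of $g(V(G))$ over resolving functions. $d_1(x,y)=\min\{d(x,y),2\}$, $R_1\{x,y\}=\{z: d_1(x,z)\neq d_1(y,z)\}$; $h:V(G)\to[0,1]$ is a $1$-truncated resolving function if $h(R_1\{x,y\})\ge 1$ for all distinct $x,y$, and $\dim_{1,f}(G)$ is the minimum of $h(V(G))$ over such $h$. *)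

theory Defs
  imports Main "HOL-Library.Extended_Real" Complex_Main
begin

fun walk_n :: "('a \<Rightarrow> 'a \<Rightarrow> bool) \<Rightarrow> nat \<Rightarrow> 'a \<Rightarrow> 'a \<Rightarrow> bool" where
  "walk_n E 0 x y = (x = y)"
| "walk_n E (Suc n) x y = (\<exists>z. E x z \<and> walk_n E n z y)"

text \<open>Graph distance: length of a shortest walk (graphs considered here are connected).\<close>
definition gdist :: "('a \<Rightarrow> 'a \<Rightarrow> bool) \<Rightarrow> 'a \<Rightarrow> 'a \<Rightarrow> nat" where
  "gdist E x y = (LEAST n. walk_n E n x y)"

definition path_V :: "nat \<Rightarrow> nat set" where
  "path_V n = {0..<n}"
definition path_E :: "nat \<Rightarrow> nat \<Rightarrow> nat \<Rightarrow> bool" where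
  "path_E n i j = (i < n \<and> j < n \<and> (i = j + 1 \<or> j = i + 1))"

definition cart_V :: "'a set \<Rightarrow> 'b set \<Rightarrow> ('a \<times> 'b) set" where
  "cart_V V1 V2 = V1 \<times> V2"
definition cart_E :: "'a set \<Rightarrow> ('a \<Rightarrow> 'a \<Rightarrow> bool) \<Rightarrow> 'b set \<Rightarrow> ('b \<Rightarrow> 'b \<Rightarrow> bool)
                      \<Rightarrow> ('a \<times> 'b) \<Rightarrow> ('a \<times> 'b) \<Rightarrow> bool" where
  "cart_E V1 E1 V2 E2 p q =
     (p \<in> V1 \<times> V2 \<and> q \<in> V1 \<times> V2 \<and>
      ((fst p = fst q \<and> E2 (snd p) (snd q)) \<or> (snd p = snd q \<and> E1 (fst p) (fst q))))"

definition grid_V :: "nat \<Rightarrow> nat \<Rightarrow> (nat \<times> nat) set" where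
  "grid_V s t = cart_V (path_V s) (path_V t)"
definition grid_E :: "nat \<Rightarrow> nat \<Rightarrow> (nat \<times> nat) \<Rightarrow> (nat \<times> nat) \<Rightarrow> bool" where
  "grid_E s t = cart_E (path_V s) (path_E s) (path_V t) (path_E t)"

definition R_set :: "'a set \<Rightarrow> ('a \<Rightarrow> 'a \<Rightarrow> nat) \<Rightarrow> 'a \<Rightarrow> 'a \<Rightarrow> 'a set" where
  "R_set V d x y = {z \<in> V. d x z \<noteq> d y z}"

definition resolving_fun :: "'a set \<Rightarrow> ('a \<Rightarrow> 'a \<Rightarrow> nat) \<Rightarrow> ('a \<Rightarrow> real) \<Rightarrow> bool" where
  "resolving_fun V d g =
     ((\<forall>v\<in>V. 0 \<le> g v \<and> g v \<le> 1) \<and>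
      (\<forall>x\<in>V. \<forall>y\<in>V. x \<noteq> y \<longrightarrow> sum g (R_set V d x y) \<ge> 1))"

definition frac_dim_wrt :: "'a set \<Rightarrow> ('a \<Rightarrow> 'a \<Rightarrow> nat) \<Rightarrow> real" where
  "frac_dim_wrt V d = Inf {sum g V | g. resolving_fun V d g}"

definition frac_dim :: "'a set \<Rightarrow> ('a \<Rightarrow> 'a \<Rightarrow> bool) \<Rightarrow> real" where
  "frac_dim V E = frac_dim_wrt V (gdist E)"

definition frac_dim1 :: "'a set \<Rightarrow> ('a \<Rightarrow> 'a \<Rightarrow> bool) \<Rightarrow> real" where
  "frac_dim1 V E = frac_dim_wrt V (\<lambda>x y. min (gdist E x y) 2)"

end

theory Submission
  imports Defs
begin


definition md :: "nat \<times> nat \<Rightarrow> nat \<times> nat \<Rightarrow> nat" where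
  "md p q = (fst p - fst q) + (fst q - fst p) + (snd p - snd q) + (snd q - snd p)"

lemma grid_V_iff: "p \<in> grid_V s t \<longleftrightarrow> fst p < s \<and> snd p < t"
  by (cases p) (auto simp: grid_V_def cart_V_def path_V_def)

lemma grid_E_iff: "grid_E s t p q \<longleftrightarrow> p \<in> grid_V s t \<and> q \<in> grid_V s t \<and> md p q = 1"
  by (cases p; cases q) (auto simp: grid_E_def cart_E_def grid_V_def cart_V_def path_V_def path_E_def md_def)

lemma md_tri: "md x y \<le> md x z + md z y"
  unfolding md_def by arith

lemma md_self[simp]: "md x x = 0" unfolding md_def by simp
lemma md_sym: "md x y = md y x" unfolding md_def by arith
lemma md_0_iff: "md x y = 0 \<longleftrightarrow> x = y" unfolding md_def by (cases x; cases y) auto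

lemma walk_lower: "walk_n (grid_E s t) n x y \<Longrightarrow> md x y \<le> n"
proof (induction n arbitrary: x)
  case 0 then show ?case by simp
next
  case (Suc n)
  then obtain z where z: "grid_E s t x z" "walk_n (grid_E s t) n z y" by auto
  have "md x y \<le> md x z + md z y" by (rule md_tri)
  moreover have "md z y \<le> n" using Suc.IH z(2) by blast
  moreover have "md x z = 1" using z(1) by (simp add: grid_E_iff)
  ultimately show ?case by simp
qed

lemma walk_upper: "x \<in> grid_V s t \<Longrightarrow> y \<in> grid_V s t \<Longrightarrow> md x y = n \<Longrightarrow> walk_n (grid_E s t) n x y"
proof (induction n arbitrary: x)
  case 0 then show ?case by (simp add: md_0_iff)
next
  case (Suc n)
  obtain a b c d where xy: "x = (a,b)" "y = (c,d)" by (cases x; cases y)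
  show ?case
  proof (cases "a = c")
    case True
    define z where "z = (a, if b < d then b + 1 else b - 1)"
    have "grid_E s t x z" "md z y = n" "z \<in> grid_V s t"
      using Suc.prems True unfolding xy z_def by (auto simp: grid_E_iff grid_V_iff md_def)
    moreover have "walk_n (grid_E s t) n z y" using Suc.IH Suc.prems(2) calculation by blast
    ultimately show ?thesis unfolding walk_n.simps by blast
  next
    case False
    define z where "z = (if a < c then a + 1 else a - 1, b)"
    have "grid_E s t x z" "md z y = n" "z \<in> grid_V s t"
      using Suc.prems False unfolding xy z_def by (auto simp: grid_E_iff grid_V_iff md_def)
    moreover have "walk_n (grid_E s t) n z y" using Suc.IH Suc.prems(2) calculation by blast
    ultimately show ?thesis unfolding walk_n.simps by blast
  qed
qed

lemma gdist_grid: "x \<in> grid_V s t \<Longrightarrow> y \<in> grid_V s t \<Longrightarrow> gdist (grid_E s t) x y = md x y"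
  unfolding gdist_def
  by (rule Least_equality) (auto intro: walk_upper dest: walk_lower)



lemma fdw_cong:
  assumes "\<forall>x\<in>V. \<forall>y\<in>V. d x y = d' x y"
  shows "frac_dim_wrt V d = frac_dim_wrt V d'"
proof -
  have "R_set V d x y = R_set V d' x y" if "x \<in> V" "y \<in> V" for x y
    using assms that unfolding R_set_def by auto
  then have "resolving_fun V d g = resolving_fun V d' g" for g
    unfolding resolving_fun_def by auto
  then show ?thesis unfolding frac_dim_wrt_def by simp
qed

lemma res_const1:
  assumes "finite V" "\<forall>x\<in>V. \<forall>y\<in>V. x \<noteq> y \<longrightarrow> d x x \<noteq> d y x"
  shows "resolving_fun V d (\<lambda>_. 1)"
  unfolding resolving_fun_def
proof (intro conjI ballI impI)
  fix x y assume xy: "x \<in> V" "y \<in> V" "x \<noteq> y"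
  have "x \<in> R_set V d x y" using assms xy unfolding R_set_def by auto
  moreover have "finite (R_set V d x y)" using assms(1) unfolding R_set_def by auto
  ultimately have "card (R_set V d x y) \<ge> 1"
    by (metis One_nat_def Suc_leI card_gt_0_iff empty_iff)
  then show "1 \<le> sum (\<lambda>_. 1::real) (R_set V d x y)" by simp
qed auto

lemma fdw_bdd: "bdd_below {sum g V | g. resolving_fun V d g}"
  unfolding bdd_below_def resolving_fun_def
  by (rule exI[of _ 0]) (auto intro: sum_nonneg)

lemma fdw_upper: "resolving_fun V d g \<Longrightarrow> frac_dim_wrt V d \<le> sum g V"
  unfolding frac_dim_wrt_def by (rule cInf_lower) (auto intro: fdw_bdd)

lemma fdw_lower:
  assumes "finite V" "\<forall>x\<in>V. \<forall>y\<in>V. x \<noteq> y \<longrightarrow> d x x \<noteq> d y x"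
    and "\<And>g. resolving_fun V d g \<Longrightarrow> c \<le> sum g V"
  shows "c \<le> frac_dim_wrt V d"
  unfolding frac_dim_wrt_def
  using res_const1[OF assms(1,2)] assms(3) by (intro cInf_greatest) auto

lemma fdw_mono:
  assumes "finite V" "\<forall>x\<in>V. \<forall>y\<in>V. x \<noteq> y \<longrightarrow> d1 x x \<noteq> d1 y x"
    and "\<forall>x\<in>V. \<forall>y\<in>V. \<forall>z\<in>V. d1 x z \<noteq> d1 y z \<longrightarrow> d x z \<noteq> d y z"
  shows "frac_dim_wrt V d \<le> frac_dim_wrt V d1"
  unfolding frac_dim_wrt_def
proof (rule cInf_superset_mono)
  show "{sum g V |g. resolving_fun V d1 g} \<noteq> {}" using res_const1[OF assms(1,2)] by auto
  show "bdd_below {sum g V |g. resolving_fun V d g}" by (rule fdw_bdd)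
  have "resolving_fun V d g" if "resolving_fun V d1 g" for g
  proof -
    have "R_set V d1 x y \<subseteq> R_set V d x y" if "x \<in> V" "y \<in> V" for x y
      using assms(3) that unfolding R_set_def by auto
    moreover have "finite (R_set V d x y)" for x y using assms(1) unfolding R_set_def by auto
    ultimately have "sum g (R_set V d1 x y) \<le> sum g (R_set V d x y)" if "x \<in> V" "y \<in> V" for x y
      using that \<open>resolving_fun V d1 g\<close> unfolding resolving_fun_def R_set_def
      by (intro sum_mono2) auto
    then show ?thesis using that unfolding resolving_fun_def
      by (meson order_trans)
  qed
  then show "{sum g V |g. resolving_fun V d1 g} \<subseteq> {sum g V |g. resolving_fun V d g}" by auto
qed

lemma sum_R_ind:
  fixes w :: real and g :: "'a \<Rightarrow> real"
  assumes "finite V"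
  shows "w * sum g (R_set V d x y) = (\<Sum>z\<in>V. g z * (if z \<in> R_set V d x y then w else 0))"
proof -
  have e: "sum g (R_set V d x y) = (\<Sum>z\<in>V. if z \<in> R_set V d x y then g z else 0)"
    using assms unfolding R_set_def by (simp add: sum.inter_filter)
  have "w * sum g (R_set V d x y) = (\<Sum>z\<in>V. w * (if z \<in> R_set V d x y then g z else 0))"
    unfolding e by (simp add: sum_distrib_left)
  also have "\<dots> = (\<Sum>z\<in>V. g z * (if z \<in> R_set V d x y then w else 0))"
    by (rule sum.cong) auto
  finally show ?thesis .
qed

lemma dual_bound:
  fixes L :: "(real \<times> 'a \<times> 'a) list"
  assumes "finite V" "resolving_fun V d g"
    and "\<forall>(w,x,y) \<in> set L. x \<in> V \<and> y \<in> V \<and> x \<noteq> y \<and> w \<ge> 0"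
    and "\<forall>z\<in>V. (\<Sum>(w,x,y)\<leftarrow>L. if z \<in> R_set V d x y then w else 0) \<le> 1"
  shows "(\<Sum>(w,x,y)\<leftarrow>L. w) \<le> sum g V"
proof -
  have "(\<Sum>(w,x,y)\<leftarrow>L. w) \<le> (\<Sum>(w,x,y)\<leftarrow>L. w * sum g (R_set V d x y))"
  proof (rule sum_list_mono)
    fix p assume "p \<in> set L"
    then obtain w x y where p: "p = (w,x,y)" "x \<in> V" "y \<in> V" "x \<noteq> y" "w \<ge> 0"
      using assms(3) by (cases p) auto
    then have "sum g (R_set V d x y) \<ge> 1" using assms(2) unfolding resolving_fun_def by auto
    then show "(case p of (w,x,y) \<Rightarrow> w) \<le> (case p of (w,x,y) \<Rightarrow> w * sum g (R_set V d x y))"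
      using p mult_left_mono[of 1 "sum g (R_set V d x y)" w] by simp
  qed
  also have "(\<Sum>(w,x,y)\<leftarrow>L. w * sum g (R_set V d x y))
      = (\<Sum>z\<in>V. g z * (\<Sum>(w,x,y)\<leftarrow>L. if z \<in> R_set V d x y then w else 0))"
  proof (induction L)
    case Nil then show ?case by simp
  next
    case (Cons p L)
    obtain w x y where p: "p = (w,x,y)" by (cases p)
    show ?case using Cons sum_R_ind[OF assms(1), of w g d x y]
      by (simp add: p distrib_left sum.distrib)
  qed
  also have "\<dots> \<le> (\<Sum>z\<in>V. g z * 1)"
    using assms(2,4) unfolding resolving_fun_def by (intro sum_mono mult_left_mono) auto
  finally show ?thesis by simp
qed



definition d1 :: "nat \<times> nat \<Rightarrow> nat \<times> nat \<Rightarrow> nat" where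
  "d1 x y = min (md x y) 2"

lemma finite_grid: "finite (grid_V s t)"
  unfolding grid_V_def cart_V_def path_V_def by simp

lemma fd_eq: "frac_dim (grid_V s t) (grid_E s t) = frac_dim_wrt (grid_V s t) md"
  unfolding frac_dim_def by (rule fdw_cong) (simp add: gdist_grid)

lemma fd1_eq: "frac_dim1 (grid_V s t) (grid_E s t) = frac_dim_wrt (grid_V s t) d1"
  unfolding frac_dim1_def d1_def by (rule fdw_cong) (simp add: gdist_grid)

lemma sep_md: "\<forall>x\<in>V. \<forall>y\<in>V. x \<noteq> y \<longrightarrow> md x x \<noteq> md y x"
  by (auto simp: md_0_iff)

lemma sep_d1: "\<forall>x\<in>V. \<forall>y\<in>V. x \<noteq> y \<longrightarrow> d1 x x \<noteq> d1 y x"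
  by (auto simp: d1_def md_0_iff)

lemma fd_le_fd1: "frac_dim_wrt (grid_V s t) md \<le> frac_dim_wrt (grid_V s t) d1"
  by (rule fdw_mono[OF finite_grid sep_d1]) (auto simp: d1_def)

lemma fd_le2:
  assumes "s \<ge> 2" "t \<ge> 1"
  shows "frac_dim_wrt (grid_V s t) md \<le> 2"
proof -
  define g where "g = (\<lambda>z::nat\<times>nat. if z = (0,0) \<or> z = (s-1,0) then 1 else (0::real))"
  have inV: "(0,0) \<in> grid_V s t" "(s-1,0) \<in> grid_V s t" using assms by (auto simp: grid_V_iff)
  have "resolving_fun (grid_V s t) md g"
    unfolding resolving_fun_def
  proof (intro conjI ballI impI)
    fix x y assume xy: "x \<in> grid_V s t" "y \<in> grid_V s t" "x \<noteq> y"
    have "md x (0,0) \<noteq> md y (0,0) \<or> md x (s-1,0) \<noteq> md y (s-1,0)"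
      using xy by (cases x; cases y) (auto simp: md_def grid_V_iff)
    then obtain p where p: "p \<in> R_set (grid_V s t) md x y" "g p = 1"
      using inV unfolding R_set_def g_def by auto
    have "finite (R_set (grid_V s t) md x y)" using finite_grid unfolding R_set_def by auto
    then have "g p \<le> sum g (R_set (grid_V s t) md x y)"
      using p by (intro member_le_sum) (auto simp: g_def)
    then show "1 \<le> sum g (R_set (grid_V s t) md x y)" using p by simp
  qed (auto simp: g_def)
  moreover have "sum g (grid_V s t) = 2"
  proof -
    have "sum g (grid_V s t) = sum g {(0,0),(s-1,0)}"
      using inV finite_grid by (intro sum.mono_neutral_right) (auto simp: g_def)
    also have "\<dots> = 2" using assms by (simp add: g_def)
    finally show ?thesis .
  qed
  ultimately show ?thesis using fdw_upper by metis
qed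



definition rfl :: "nat \<Rightarrow> nat \<Rightarrow> bool \<Rightarrow> bool \<Rightarrow> nat \<times> nat \<Rightarrow> nat \<times> nat" where
  "rfl s t fx fy p = ((if fx then s - 1 - fst p else fst p), (if fy then t - 1 - snd p else snd p))"

lemma rfl_md:
  assumes "p \<in> grid_V s t" "z \<in> grid_V s t"
  shows "md (rfl s t fx fy p) z = md p (rfl s t fx fy z)"
  using assms by (cases p; cases z) (auto simp: rfl_def md_def grid_V_iff)

lemma rfl_inV: "p \<in> grid_V s t \<Longrightarrow> rfl s t fx fy p \<in> grid_V s t"
  by (cases p) (auto simp: rfl_def grid_V_iff)

lemma rfl_inj: "p \<in> grid_V s t \<Longrightarrow> q \<in> grid_V s t \<Longrightarrow> rfl s t fx fy p = rfl s t fx fy q \<Longrightarrow> p = q"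
  by (cases p; cases q) (auto simp: rfl_def grid_V_iff split: if_splits)

definition ind :: "nat \<times> nat \<Rightarrow> nat \<times> nat \<Rightarrow> nat \<times> nat \<Rightarrow> bool" where
  "ind p q w = (d1 p w \<noteq> d1 q w)"

definition loc_cov :: "nat \<times> nat \<Rightarrow> real" where
  "loc_cov w = (if ind (1,0) (0,1) w then 1/4 else 0) + (if ind (0,0) (0,1) w then 1/4 else 0)
              + (if ind (0,0) (1,1) w then 1/8 else 0)"

definition clist :: "nat \<Rightarrow> nat \<Rightarrow> bool \<Rightarrow> bool \<Rightarrow> (real \<times> (nat \<times> nat) \<times> (nat \<times> nat)) list" where
  "clist s t fx fy = [(1/4, rfl s t fx fy (1,0), rfl s t fx fy (0,1)),
                      (1/4, rfl s t fx fy (0,0), rfl s t fx fy (0,1)),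
                      (1/8, rfl s t fx fy (0,0), rfl s t fx fy (1,1))]"

lemma clist_cov:
  assumes "s \<ge> 2" "t \<ge> 2" "z \<in> grid_V s t"
  shows "(\<Sum>(w,x,y)\<leftarrow>clist s t fx fy. if z \<in> R_set (grid_V s t) d1 x y then w else 0)
         = loc_cov (rfl s t fx fy z)"
proof -
  have V: "(0,0) \<in> grid_V s t" "(1,0) \<in> grid_V s t" "(0,1) \<in> grid_V s t" "(1,1) \<in> grid_V s t"
    using assms by (auto simp: grid_V_iff)
  show ?thesis
    using assms(3) V unfolding clist_def loc_cov_def ind_def R_set_def d1_def
    by (simp add: rfl_md)
qed

lemma clist_valid:
  assumes "s \<ge> 2" "t \<ge> 2"
  shows "\<forall>(w,x,y) \<in> set (clist s t fx fy). x \<in> grid_V s t \<and> y \<in> grid_V s t \<and> x \<noteq> y \<and> w \<ge> 0"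
proof -
  have V: "(0,0) \<in> grid_V s t" "(1,0) \<in> grid_V s t" "(0,1) \<in> grid_V s t" "(1,1) \<in> grid_V s t"
    using assms by (auto simp: grid_V_iff)
  show ?thesis unfolding clist_def using V assms
    by (auto simp: rfl_inV) (auto simp: rfl_def split: if_splits)
qed

lemma clist_w: "(\<Sum>(w,x,y)\<leftarrow>clist s t fx fy. w) = 5/8"
  unfolding clist_def by simp

lemma loc_cov_zero: "fst w \<ge> 3 \<or> snd w \<ge> 3 \<Longrightarrow> loc_cov w = 0"
  by (cases w) (auto simp: loc_cov_def ind_def d1_def md_def)

lemma loc_cov_vals:
  "loc_cov (0,0) = 3/8" "loc_cov (1,0) = 1/2" "loc_cov (0,1) = 1/2" "loc_cov (2,0) = 1/4"
  "loc_cov (0,2) = 1/2" "loc_cov (1,1) = 3/8" "loc_cov (2,1) = 1/8" "loc_cov (1,2) = 1/8"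
  "loc_cov (2,2) = 0"
  by (simp_all add: loc_cov_def ind_def d1_def md_def)

lemma loc_cov_le: "loc_cov w \<le> 1/2"
proof (cases "fst w \<ge> 3 \<or> snd w \<ge> 3")
  case True then show ?thesis by (simp add: loc_cov_zero)
next
  case False
  then obtain u v where w: "w = (u,v)" "u < 3" "v < 3" by (cases w) auto
  then have "u = 0 \<or> u = 1 \<or> u = 2" "v = 0 \<or> v = 1 \<or> v = 2" by auto
  then show ?thesis using w by (auto simp: loc_cov_def ind_def d1_def md_def)
qed



lemma less5: "a < (5::nat) \<Longrightarrow> a = 0 \<or> a = 1 \<or> a = 2 \<or> a = 3 \<or> a = 4" by arith
lemma less4: "a < (4::nat) \<Longrightarrow> a = 0 \<or> a = 1 \<or> a = 2 \<or> a = 3" by arith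
lemma less3: "a < (3::nat) \<Longrightarrow> a = 0 \<or> a = 1 \<or> a = 2" by arith
lemma less2: "a < (2::nat) \<Longrightarrow> a = 0 \<or> a = 1" by arith

lemma cov52: assumes "a < 5" "b < 2"
  shows "loc_cov (a,b) + loc_cov (5-1-a,b) + loc_cov (a,2-1-b) + loc_cov (5-1-a,2-1-b) \<le> 1"
proof -
  from less5[OF assms(1)] less2[OF assms(2)] show ?thesis
    by (elim disjE) (simp_all add: loc_cov_def ind_def d1_def md_def)
qed

lemma cov43: assumes "a < 4" "b < 3"
  shows "loc_cov (a,b) + loc_cov (4-1-a,b) + loc_cov (a,3-1-b) + loc_cov (4-1-a,3-1-b) \<le> 1"
proof -
  from less4[OF assms(1)] less3[OF assms(2)] show ?thesis
    by (elim disjE) (simp_all add: loc_cov_def ind_def d1_def md_def)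
qed

lemma cov53: assumes "a < 5" "b < 3"
  shows "loc_cov (a,b) + loc_cov (5-1-a,b) + loc_cov (a,3-1-b) + loc_cov (5-1-a,3-1-b) \<le> 1"
proof -
  from less5[OF assms(1)] less3[OF assms(2)] show ?thesis
    by (elim disjE) (simp_all add: loc_cov_def ind_def d1_def md_def)
qed

lemma cov44: assumes "a < 4" "b < 4"
  shows "loc_cov (a,b) + loc_cov (4-1-a,b) + loc_cov (a,4-1-b) + loc_cov (4-1-a,4-1-b) \<le> 1"
proof -
  from less4[OF assms(1)] less4[OF assms(2)] show ?thesis
    by (elim disjE) (simp_all add: loc_cov_def ind_def d1_def md_def)
qed

lemma cov54: assumes "a < 5" "b < 4"
  shows "loc_cov (a,b) + loc_cov (5-1-a,b) + loc_cov (a,4-1-b) + loc_cov (5-1-a,4-1-b) \<le> 1"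
proof -
  from less5[OF assms(1)] less4[OF assms(2)] show ?thesis
    by (elim disjE) (simp_all add: loc_cov_def ind_def d1_def md_def)
qed

lemma cov55: assumes "a < 5" "b < 5"
  shows "loc_cov (a,b) + loc_cov (5-1-a,b) + loc_cov (a,5-1-b) + loc_cov (5-1-a,5-1-b) \<le> 1"
proof -
  from less5[OF assms(1)] less5[OF assms(2)] show ?thesis
    by (elim disjE) (simp_all add: loc_cov_def ind_def d1_def md_def)
qed


lemma cover:
  assumes "t \<le> s" "2 \<le> t" "(s,t) \<notin> {(2,2),(3,2),(4,2),(3,3)}" "a < s" "b < t"
  shows "loc_cov (a,b) + loc_cov (s-1-a,b) + loc_cov (a,t-1-b) + loc_cov (s-1-a,t-1-b) \<le> 1"
proof -
  have le: "loc_cov w \<le> 1/2" for w by (rule loc_cov_le)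
  have n: "\<not>(s=2 \<and> t=2)" "\<not>(s=3 \<and> t=2)" "\<not>(s=4 \<and> t=2)" "\<not>(s=3 \<and> t=3)" using assms(3) by auto
  have "s \<ge> 6 \<or> t \<ge> 6 \<or> (s = 5 \<and> t = 2) \<or> (s = 4 \<and> t = 3) \<or> (s = 5 \<and> t = 3)
    \<or> (s = 4 \<and> t = 4) \<or> (s = 5 \<and> t = 4) \<or> (s = 5 \<and> t = 5)"
    using assms(1,2) n by arith
  then consider "s \<ge> 6" | "t \<ge> 6" | "s = 5 \<and> t = 2" | "s = 4 \<and> t = 3" | "s = 5 \<and> t = 3"
    | "s = 4 \<and> t = 4" | "s = 5 \<and> t = 4" | "s = 5 \<and> t = 5"
    by blast
  then show ?thesis
  proof cases
    case 1
    then have "a \<ge> 3 \<or> s - 1 - a \<ge> 3" by arith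
    then show ?thesis
    proof
      assume "a \<ge> 3" then have "loc_cov (a,b) = 0" "loc_cov (a,t-1-b) = 0" by (simp_all add: loc_cov_zero)
      then show ?thesis using le[of "(s-1-a,b)"] le[of "(s-1-a,t-1-b)"] by linarith
    next
      assume "s - 1 - a \<ge> 3" then have "loc_cov (s-1-a,b) = 0" "loc_cov (s-1-a,t-1-b) = 0" by (simp_all add: loc_cov_zero)
      then show ?thesis using le[of "(a,b)"] le[of "(a,t-1-b)"] by linarith
    qed
  next
    case 2
    then have "b \<ge> 3 \<or> t - 1 - b \<ge> 3" using assms by arith
    then show ?thesis
    proof
      assume "b \<ge> 3" then have "loc_cov (a,b) = 0" "loc_cov (s-1-a,b) = 0" by (simp_all add: loc_cov_zero)
      then show ?thesis using le[of "(a,t-1-b)"] le[of "(s-1-a,t-1-b)"] by linarith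
    next
      assume "t - 1 - b \<ge> 3" then have "loc_cov (a,t-1-b) = 0" "loc_cov (s-1-a,t-1-b) = 0" by (simp_all add: loc_cov_zero)
      then show ?thesis using le[of "(a,b)"] le[of "(s-1-a,b)"] by linarith
    qed
  next
    case 3 then show ?thesis using cov52[of a b] assms(4,5) by simp
  next
    case 4 then show ?thesis using cov43[of a b] assms(4,5) by simp
  next
    case 5 then show ?thesis using cov53[of a b] assms(4,5) by simp
  next
    case 6 then show ?thesis using cov44[of a b] assms(4,5) by simp
  next
    case 7 then show ?thesis using cov54[of a b] assms(4,5) by simp
  next
    case 8 then show ?thesis using cov55[of a b] assms(4,5) by simp
  qed
qed


lemma fd1_ge:
  assumes "t \<le> s" "2 \<le> t" "(s,t) \<notin> {(2,2),(3,2),(4,2),(3,3)}"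
  shows "5/2 \<le> frac_dim_wrt (grid_V s t) d1"
proof (rule fdw_lower[OF finite_grid sep_d1])
  fix g assume g: "resolving_fun (grid_V s t) d1 g"
  define L where "L = clist s t False False @ clist s t True False @ clist s t False True @ clist s t True True"
  have "(\<Sum>(w,x,y)\<leftarrow>L. w) \<le> sum g (grid_V s t)"
  proof (rule dual_bound[OF finite_grid g])
    show "\<forall>(w,x,y) \<in> set L. x \<in> grid_V s t \<and> y \<in> grid_V s t \<and> x \<noteq> y \<and> w \<ge> 0"
      using clist_valid[of s t] assms(2,1) unfolding L_def set_append ball_Un by (meson order_trans)
    show "\<forall>z\<in>grid_V s t. (\<Sum>(w,x,y)\<leftarrow>L. if z \<in> R_set (grid_V s t) d1 x y then w else 0) \<le> 1"
    proof
      fix z assume z: "z \<in> grid_V s t"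
      obtain a b where ab: "z = (a,b)" by (cases z)
      have "a < s" "b < t" using z ab by (auto simp: grid_V_iff)
      then show "(\<Sum>(w,x,y)\<leftarrow>L. if z \<in> R_set (grid_V s t) d1 x y then w else 0) \<le> 1"
        using cover[OF assms] z assms unfolding L_def
        by (simp add: clist_cov ab rfl_def add.assoc)
    qed
  qed
  moreover have "(\<Sum>(w,x,y)\<leftarrow>L. w) = 5/2" unfolding L_def by (simp add: clist_w)
  ultimately show "5/2 \<le> sum g (grid_V s t)" by simp
qed



lemma sum_grid: "sum f (grid_V s t) = (\<Sum>a<s. \<Sum>b<t. f (a,b))"
proof -
  have "grid_V s t = {..<s} \<times> {..<t}" unfolding grid_V_def cart_V_def path_V_def by auto
  then show ?thesis by (simp add: sum.cartesian_product)
qed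

lemma sum_R_grid: "sum g (R_set (grid_V s t) d x y) = (\<Sum>a<s. \<Sum>b<t. if d x (a,b) \<noteq> d y (a,b) then g (a,b) else 0)"
proof -
  have "sum g (R_set (grid_V s t) d x y) = (\<Sum>z\<in>grid_V s t. if d x z \<noteq> d y z then g z else 0)"
    unfolding R_set_def using finite_grid by (simp add: sum.inter_filter)
  then show ?thesis by (simp add: sum_grid)
qed

lemma lower22: "2 \<le> frac_dim_wrt (grid_V 2 2) md"
proof (rule fdw_lower[OF finite_grid sep_md])
  fix g assume g: "resolving_fun (grid_V 2 2) md g"
  define L :: "(real \<times> (nat \<times> nat) \<times> (nat \<times> nat)) list" where
    "L = [(1/2,(1,0),(0,1)), (1/2,(2-2,0),(2-1,1)), (1/2,(0,2-2),(1,2-1)), (1/2,(2-1,2-2),(2-2,2-1))]"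
  have "(\<Sum>(w,x,y)\<leftarrow>L. w) \<le> sum g (grid_V 2 2)"
  proof (rule dual_bound[OF finite_grid g])
    show "\<forall>(w,x,y) \<in> set L. x \<in> grid_V 2 2 \<and> y \<in> grid_V 2 2 \<and> x \<noteq> y \<and> w \<ge> 0"
      unfolding L_def by (simp add: grid_V_iff)
    show "\<forall>z\<in>grid_V 2 2. (\<Sum>(w,x,y)\<leftarrow>L. if z \<in> R_set (grid_V 2 2) md x y then w else 0) \<le> 1"
    proof
      fix z assume z: "z \<in> grid_V 2 2"
      obtain a b where ab: "z = (a,b)" by (cases z)
      have "a < 2" "b < 2" using z ab by (auto simp: grid_V_iff)
      from less2[OF this(1)] less2[OF this(2)]
      show "(\<Sum>(w,x,y)\<leftarrow>L. if z \<in> R_set (grid_V 2 2) md x y then w else 0) \<le> 1"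
        unfolding L_def ab R_set_def
        by (elim disjE) (simp_all add: md_def grid_V_iff)
    qed
  qed
  then show "2 \<le> sum g (grid_V 2 2)" unfolding L_def by simp
qed

lemma upper22: "frac_dim_wrt (grid_V 2 2) d1 \<le> 2"
proof -
  define g :: "nat \<times> nat \<Rightarrow> real" where "g = (\<lambda>z. if snd z = 0 then 1 else 0)"
  have "resolving_fun (grid_V 2 2) d1 g"
    unfolding resolving_fun_def
  proof (intro conjI ballI impI)
    fix x y assume xy: "x \<in> grid_V 2 2" "y \<in> grid_V 2 2" "x \<noteq> y"
    obtain a b c e where ab: "x = (a,b)" "y = (c,e)" by (cases x; cases y)
    have "a < 2" "b < 2" "c < 2" "e < 2" using xy ab by (auto simp: grid_V_iff)
    from less2[OF this(1)] less2[OF this(2)] less2[OF this(3)] less2[OF this(4)]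
    show "1 \<le> sum g (R_set (grid_V 2 2) d1 x y)"
      unfolding sum_R_grid ab using xy(3) unfolding ab
      by (elim disjE) (simp_all add: g_def d1_def md_def numeral_eq_Suc lessThan_Suc)
  qed (auto simp: g_def)
  moreover have "sum g (grid_V 2 2) = 2"
    unfolding sum_grid by (simp add: g_def numeral_eq_Suc lessThan_Suc)
  ultimately show ?thesis using fdw_upper by metis
qed

lemma lower32: "2 \<le> frac_dim_wrt (grid_V 3 2) md"
proof (rule fdw_lower[OF finite_grid sep_md])
  fix g assume g: "resolving_fun (grid_V 3 2) md g"
  define L :: "(real \<times> (nat \<times> nat) \<times> (nat \<times> nat)) list" where
    "L = [(1/2,(1,0),(0,1)), (1/2,(3-2,0),(3-1,1)), (1/2,(0,2-2),(1,2-1)), (1/2,(3-1,2-2),(3-2,2-1))]"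
  have "(\<Sum>(w,x,y)\<leftarrow>L. w) \<le> sum g (grid_V 3 2)"
  proof (rule dual_bound[OF finite_grid g])
    show "\<forall>(w,x,y) \<in> set L. x \<in> grid_V 3 2 \<and> y \<in> grid_V 3 2 \<and> x \<noteq> y \<and> w \<ge> 0"
      unfolding L_def by (simp add: grid_V_iff)
    show "\<forall>z\<in>grid_V 3 2. (\<Sum>(w,x,y)\<leftarrow>L. if z \<in> R_set (grid_V 3 2) md x y then w else 0) \<le> 1"
    proof
      fix z assume z: "z \<in> grid_V 3 2"
      obtain a b where ab: "z = (a,b)" by (cases z)
      have "a < 3" "b < 2" using z ab by (auto simp: grid_V_iff)
      from less3[OF this(1)] less2[OF this(2)]
      show "(\<Sum>(w,x,y)\<leftarrow>L. if z \<in> R_set (grid_V 3 2) md x y then w else 0) \<le> 1"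
        unfolding L_def ab R_set_def
        by (elim disjE) (simp_all add: md_def grid_V_iff)
    qed
  qed
  then show "2 \<le> sum g (grid_V 3 2)" unfolding L_def by simp
qed

lemma upper32: "frac_dim_wrt (grid_V 3 2) d1 \<le> 2"
proof -
  define g :: "nat \<times> nat \<Rightarrow> real" where "g = (\<lambda>z. if snd z = 0 \<and> fst z \<noteq> 1 then 1 else 0)"
  have "resolving_fun (grid_V 3 2) d1 g"
    unfolding resolving_fun_def
  proof (intro conjI ballI impI)
    fix x y assume xy: "x \<in> grid_V 3 2" "y \<in> grid_V 3 2" "x \<noteq> y"
    obtain a b c e where ab: "x = (a,b)" "y = (c,e)" by (cases x; cases y)
    have "a < 3" "b < 2" "c < 3" "e < 2" using xy ab by (auto simp: grid_V_iff)
    from less3[OF this(1)] less2[OF this(2)] less3[OF this(3)] less2[OF this(4)]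
    show "1 \<le> sum g (R_set (grid_V 3 2) d1 x y)"
      unfolding sum_R_grid ab using xy(3) unfolding ab
      by (elim disjE) (simp_all add: g_def d1_def md_def numeral_eq_Suc lessThan_Suc)
  qed (auto simp: g_def)
  moreover have "sum g (grid_V 3 2) = 2"
    unfolding sum_grid by (simp add: g_def numeral_eq_Suc lessThan_Suc)
  ultimately show ?thesis using fdw_upper by metis
qed

lemma lower42: "2 \<le> frac_dim_wrt (grid_V 4 2) md"
proof (rule fdw_lower[OF finite_grid sep_md])
  fix g assume g: "resolving_fun (grid_V 4 2) md g"
  define L :: "(real \<times> (nat \<times> nat) \<times> (nat \<times> nat)) list" where
    "L = [(1/2,(1,0),(0,1)), (1/2,(4-2,0),(4-1,1)), (1/2,(0,2-2),(1,2-1)), (1/2,(4-1,2-2),(4-2,2-1))]"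
  have "(\<Sum>(w,x,y)\<leftarrow>L. w) \<le> sum g (grid_V 4 2)"
  proof (rule dual_bound[OF finite_grid g])
    show "\<forall>(w,x,y) \<in> set L. x \<in> grid_V 4 2 \<and> y \<in> grid_V 4 2 \<and> x \<noteq> y \<and> w \<ge> 0"
      unfolding L_def by (simp add: grid_V_iff)
    show "\<forall>z\<in>grid_V 4 2. (\<Sum>(w,x,y)\<leftarrow>L. if z \<in> R_set (grid_V 4 2) md x y then w else 0) \<le> 1"
    proof
      fix z assume z: "z \<in> grid_V 4 2"
      obtain a b where ab: "z = (a,b)" by (cases z)
      have "a < 4" "b < 2" using z ab by (auto simp: grid_V_iff)
      from less4[OF this(1)] less2[OF this(2)]
      show "(\<Sum>(w,x,y)\<leftarrow>L. if z \<in> R_set (grid_V 4 2) md x y then w else 0) \<le> 1"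
        unfolding L_def ab R_set_def
        by (elim disjE) (simp_all add: md_def grid_V_iff)
    qed
  qed
  then show "2 \<le> sum g (grid_V 4 2)" unfolding L_def by simp
qed

lemma upper42: "frac_dim_wrt (grid_V 4 2) d1 \<le> 2"
proof -
  define g :: "nat \<times> nat \<Rightarrow> real" where "g = (\<lambda>z. if fst z = 1 \<or> fst z = 2 then 1/2 else 0)"
  have "resolving_fun (grid_V 4 2) d1 g"
    unfolding resolving_fun_def
  proof (intro conjI ballI impI)
    fix x y assume xy: "x \<in> grid_V 4 2" "y \<in> grid_V 4 2" "x \<noteq> y"
    obtain a b c e where ab: "x = (a,b)" "y = (c,e)" by (cases x; cases y)
    have "a < 4" "b < 2" "c < 4" "e < 2" using xy ab by (auto simp: grid_V_iff)
    from less4[OF this(1)] less2[OF this(2)] less4[OF this(3)] less2[OF this(4)]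
    show "1 \<le> sum g (R_set (grid_V 4 2) d1 x y)"
      unfolding sum_R_grid ab using xy(3) unfolding ab
      by (elim disjE) (simp_all add: g_def d1_def md_def numeral_eq_Suc lessThan_Suc)
  qed (auto simp: g_def)
  moreover have "sum g (grid_V 4 2) = 2"
    unfolding sum_grid by (simp add: g_def numeral_eq_Suc lessThan_Suc)
  ultimately show ?thesis using fdw_upper by metis
qed

lemma lower33: "2 \<le> frac_dim_wrt (grid_V 3 3) md"
proof (rule fdw_lower[OF finite_grid sep_md])
  fix g assume g: "resolving_fun (grid_V 3 3) md g"
  define L :: "(real \<times> (nat \<times> nat) \<times> (nat \<times> nat)) list" where
    "L = [(1/2,(1,0),(0,1)), (1/2,(3-2,0),(3-1,1)), (1/2,(0,3-2),(1,3-1)), (1/2,(3-1,3-2),(3-2,3-1))]"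
  have "(\<Sum>(w,x,y)\<leftarrow>L. w) \<le> sum g (grid_V 3 3)"
  proof (rule dual_bound[OF finite_grid g])
    show "\<forall>(w,x,y) \<in> set L. x \<in> grid_V 3 3 \<and> y \<in> grid_V 3 3 \<and> x \<noteq> y \<and> w \<ge> 0"
      unfolding L_def by (simp add: grid_V_iff)
    show "\<forall>z\<in>grid_V 3 3. (\<Sum>(w,x,y)\<leftarrow>L. if z \<in> R_set (grid_V 3 3) md x y then w else 0) \<le> 1"
    proof
      fix z assume z: "z \<in> grid_V 3 3"
      obtain a b where ab: "z = (a,b)" by (cases z)
      have "a < 3" "b < 3" using z ab by (auto simp: grid_V_iff)
      from less3[OF this(1)] less3[OF this(2)]
      show "(\<Sum>(w,x,y)\<leftarrow>L. if z \<in> R_set (grid_V 3 3) md x y then w else 0) \<le> 1"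
        unfolding L_def ab R_set_def
        by (elim disjE) (simp_all add: md_def grid_V_iff)
    qed
  qed
  then show "2 \<le> sum g (grid_V 3 3)" unfolding L_def by simp
qed

lemma upper33: "frac_dim_wrt (grid_V 3 3) d1 \<le> 2"
proof -
  define g :: "nat \<times> nat \<Rightarrow> real" where "g = (\<lambda>z. if (fst z = 1) \<noteq> (snd z = 1) then 1/2 else 0)"
  have "resolving_fun (grid_V 3 3) d1 g"
    unfolding resolving_fun_def
  proof (intro conjI ballI impI)
    fix x y assume xy: "x \<in> grid_V 3 3" "y \<in> grid_V 3 3" "x \<noteq> y"
    obtain a b c e where ab: "x = (a,b)" "y = (c,e)" by (cases x; cases y)
    have "a < 3" "b < 3" "c < 3" "e < 3" using xy ab by (auto simp: grid_V_iff)
    from less3[OF this(1)] less3[OF this(2)] less3[OF this(3)] less3[OF this(4)]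
    show "1 \<le> sum g (R_set (grid_V 3 3) d1 x y)"
      unfolding sum_R_grid ab using xy(3) unfolding ab
      by (elim disjE) (simp_all add: g_def d1_def md_def numeral_eq_Suc lessThan_Suc)
  qed (auto simp: g_def)
  moreover have "sum g (grid_V 3 3) = 2"
    unfolding sum_grid by (simp add: g_def numeral_eq_Suc lessThan_Suc)
  ultimately show ?thesis using fdw_upper by metis
qed


theorem proposition3p10:
  fixes s t :: nat
  assumes "s \<ge> t" and "t \<ge> 2"
  shows "frac_dim1 (grid_V s t) (grid_E s t) = frac_dim (grid_V s t) (grid_E s t)
           \<longleftrightarrow> (s, t) \<in> {(2, 2), (3, 2), (4, 2), (3, 3)}"
proof
  assume eq: "frac_dim1 (grid_V s t) (grid_E s t) = frac_dim (grid_V s t) (grid_E s t)"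
  show "(s, t) \<in> {(2, 2), (3, 2), (4, 2), (3, 3)}"
  proof (rule ccontr)
    assume "(s, t) \<notin> {(2, 2), (3, 2), (4, 2), (3, 3)}"
    then have "5/2 \<le> frac_dim_wrt (grid_V s t) d1" using fd1_ge assms by blast
    moreover have "frac_dim_wrt (grid_V s t) md \<le> 2" using fd_le2 assms by simp
    ultimately show False using eq unfolding fd_eq fd1_eq by simp
  qed
next
  assume "(s, t) \<in> {(2, 2), (3, 2), (4, 2), (3, 3)}"
  then have "2 \<le> frac_dim_wrt (grid_V s t) md \<and> frac_dim_wrt (grid_V s t) d1 \<le> 2"
    using lower22 upper22 lower32 upper32 lower42 upper42 lower33 upper33 by auto
  then show "frac_dim1 (grid_V s t) (grid_E s t) = frac_dim (grid_V s t) (grid_E s t)"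
    unfolding fd_eq fd1_eq using fd_le_fd1[of s t] by simp
qed

end
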